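(* Let $\mathbb{F}$ be a field, $n\ge1$, $r\ge3$, and let $\mathcal{F},\mathcal{F}'$ be flags in $\mathbb{F}^n$ of length $r$ with $\mathrm{sig}(\mathcal{F})=(i_1,\dots,i_r)$ and $\mathrm{sig}(\mathcal{F}')=(j_1,\dots,j_r)$. If the semigroups $\varphi(\mathcal{F})$ and $\varphi(\mathcal{F}')$ are isomorphic, then $i_t=j_t$ for all $t=2,\dots,r-1$.
   Context: $M(n,\mathbb{F})$ is the semigroup of $n\times n$ matrices over $\mathbb{F}$, identified with linear operators on $\mathbb{F}^n$. A flag of length $r$ is a chain $0=V_0\subsetneq V_1\subsetneq\cdots\subsetneq V_r=\mathbb{F}^n$ of subspaces; its signature is $(d_1,\dots,d_r)$ with $d_i=\dim(V_i/V_{i-1})$. $\varphi(\mathcal{F})=\{a\in M(n,\mathbb{F}) : a(V_i)\subseteq V_{i-1}\text{ for all } i=1,\dots,r\}$. *)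

theory Defs
  imports "HOL-Analysis.Analysis"
begin

text \<open>F^n is modelled as the type 'a^'n with 'a a field and 'n a finite index type
  (so n = CARD('n) >= 1).\<close>

definition is_flag :: "nat \<Rightarrow> (nat \<Rightarrow> ('a::field ^ 'n) set) \<Rightarrow> bool" where
  "is_flag r V \<longleftrightarrow> V 0 = {0} \<and> V r = UNIV \<and> (\<forall>i\<le>r. vec.subspace (V i))
     \<and> (\<forall>i\<in>{1..r}. V (i - 1) \<subset> V i)"

text \<open>The i-th entry of the signature: dim (V i / V (i-1)) = dim V i - dim V (i-1).\<close>
definition flag_sig :: "(nat \<Rightarrow> ('a::field ^ 'n) set) \<Rightarrow> nat \<Rightarrow> nat" where
  "flag_sig V i = vec.dim (V i) - vec.dim (V (i - 1))"

definition flag_phi :: "nat \<Rightarrow> (nat \<Rightarrow> ('a::field ^ 'n) set) \<Rightarrow> ('a ^ 'n ^ 'n) set" where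
  "flag_phi r V = {A. \<forall>i\<in>{1..r}. (\<lambda>x. A *v x) ` V i \<subseteq> V (i - 1)}"

definition semigroup_iso :: "('a::semiring_1 ^ 'n ^ 'n) set \<Rightarrow> ('a ^ 'n ^ 'n) set
    \<Rightarrow> ('a ^ 'n ^ 'n \<Rightarrow> 'a ^ 'n ^ 'n) \<Rightarrow> bool" where
  "semigroup_iso S T f \<longleftrightarrow> bij_betw f S T \<and> (\<forall>a\<in>S. \<forall>b\<in>S. f (a ** b) = f a ** f b)"

end

theory Submission
  imports Defs
begin


lemma flag_sub: "is_flag r V \<Longrightarrow> i \<le> r \<Longrightarrow> vec.subspace (V i)"
  by (simp add: is_flag_def)

lemma flag_strict: "is_flag r V \<Longrightarrow> 1 \<le> i \<Longrightarrow> i \<le> r \<Longrightarrow> V (i-1) \<subset> V i"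
  by (simp add: is_flag_def)

lemma flag_mono:
  assumes "is_flag r V" "i \<le> j" "j \<le> r"
  shows "V i \<subseteq> V j"
  using assms(2,3)
proof (induction j)
  case 0 then show ?case by simp
next
  case (Suc j)
  show ?case
  proof (cases "i = Suc j")
    case True then show ?thesis by simp
  next
    case False
    then have "V i \<subseteq> V j" using Suc by simp
    moreover have "V j \<subset> V (Suc j)" using flag_strict[OF assms(1), of "Suc j"] Suc.prems by simp
    ultimately show ?thesis by blast
  qed
qed

lemma ext_map:
  fixes U :: "('a::field^'n) set"
  assumes "vec.subspace U" "v \<notin> U"
  shows "\<exists>g. Vector_Spaces.linear (*s) (*s) g \<and> (\<forall>x\<in>U. g x = 0) \<and> g v = w \<and> range g \<subseteq> vec.span {w}"
proof -
  obtain B where B: "B \<subseteq> U" "vec.independent B" "U \<subseteq> vec.span B" "card B = vec.dim U"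
    by (rule vec.basis_exists[of U])
  have "vec.span B \<subseteq> U" using B(1) assms(1) by (simp add: vec.span_minimal)
  then have vB: "v \<notin> vec.span B" using assms(2) by blast
  then have ind: "vec.independent (insert v B)" using B(2) vec.independent_insertI by blast
  define h where "h = (\<lambda>x. if x = v then w else 0)"
  obtain g where g: "Vector_Spaces.linear (*s) (*s) g" "\<forall>x\<in>insert v B. g x = h x"
     "range g = vec.span (h ` insert v B)"
    using vec.linear_independent_extend_subspace[OF ind, of h] by blast
  have "h ` insert v B \<subseteq> insert 0 {w}" by (auto simp: h_def)
  then have "vec.span (h ` insert v B) \<subseteq> vec.span {w}"
    by (metis vec.span_insert_0 vec.span_mono)
  moreover have "\<forall>x\<in>U. g x = 0"
  proof
    fix x assume "x \<in> U"
    then have "x \<in> vec.span B" using B(3) by blast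
    moreover have "\<forall>y\<in>B. g y = 0" using g(2) vB vec.span_base[of _ B] h_def by auto
    ultimately show "g x = 0" using vec.linear_eq_0_on_span[OF g(1)] by blast
  qed
  moreover have "g v = w" using g(2) by (simp add: h_def)
  ultimately show ?thesis using g(1,3) by blast
qed

lemma rank_one_in_phi:
  assumes "is_flag r V" "k \<le> r" "Vector_Spaces.linear (*s) (*s) g"
    "\<forall>x\<in>V k. g x = 0" "range g \<subseteq> V k"
  shows "matrix g \<in> flag_phi r V"
  unfolding flag_phi_def
proof (intro CollectI ballI subsetI)
  fix i y assume i: "i \<in> {1..r}" and y: "y \<in> (\<lambda>x. matrix g *v x) ` V i"
  then obtain x where x: "x \<in> V i" "y = g x" using matrix_works[OF assms(3)] by auto
  show "y \<in> V (i - 1)"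
  proof (cases "i \<le> k")
    case True
    then have "x \<in> V k" using flag_mono[OF assms(1) True assms(2)] x by blast
    have "vec.subspace (V (i-1))" using flag_sub[OF assms(1)] i by auto
    then show ?thesis using x \<open>x \<in> V k\<close> assms(4) vec.subspace_0 by auto
  next
    case False
    then have "V k \<subseteq> V (i-1)" using flag_mono[OF assms(1), of k "i-1"] i by auto
    then show ?thesis using x assms(5) by auto
  qed
qed

lemma phi_zero: fixes V :: "nat \<Rightarrow> ('a::field^'n) set" shows "is_flag r V \<Longrightarrow> 0 \<in> flag_phi r V"
  unfolding flag_phi_def
proof (intro CollectI ballI subsetI)
  fix i y assume "is_flag r V" "i \<in> {1..r}" "y \<in> (\<lambda>x. (0::'a^'n^'n) *v x) ` V i"
  moreover have "vec.subspace (V (i-1))"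
    by (rule flag_sub[OF \<open>is_flag r V\<close>]) (use \<open>i \<in> {1..r}\<close> in auto)
  ultimately show "y \<in> V (i-1)" using vec.subspace_0 by auto
qed

lemma phi_apply: "a \<in> flag_phi r V \<Longrightarrow> 1 \<le> i \<Longrightarrow> i \<le> r \<Longrightarrow> x \<in> V i \<Longrightarrow> a *v x \<in> V (i-1)"
  unfolding flag_phi_def by (auto simp: image_subset_iff)

lemma phi_preserve:
  assumes "is_flag r V" "a \<in> flag_phi r V" "j \<le> r" "x \<in> V j"
  shows "a *v x \<in> V j"
proof (cases j)
  case 0
  then show ?thesis using assms unfolding is_flag_def by auto
next
  case (Suc j')
  then have "a *v x \<in> V j'" using phi_apply[OF assms(2), of j x] assms by auto
  then show ?thesis using flag_mono[OF assms(1), of j' j] Suc assms by auto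
qed

lemma phi_mult:
  assumes "is_flag r V" "a \<in> flag_phi r V" "b \<in> flag_phi r V"
  shows "b ** a \<in> flag_phi r V"
  unfolding flag_phi_def
proof (intro CollectI ballI subsetI)
  fix i y assume i: "i \<in> {1..r}" and y: "y \<in> (\<lambda>x. (b ** a) *v x) ` V i"
  then obtain x where x: "x \<in> V i" "y = b *v (a *v x)" by (auto simp: matrix_vector_mul_assoc)
  have "a *v x \<in> V (i-1)" using phi_apply[OF assms(2)] i x by auto
  then show "y \<in> V (i-1)" using phi_preserve[OF assms(1,3), of "i-1"] i x by auto
qed

definition AnnV :: "('a::field^'n^'n) set \<Rightarrow> ('a^'n) set \<Rightarrow> ('a^'n^'n) set" where
  "AnnV S M = {b\<in>S. \<forall>v\<in>M. b *v v = 0}"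
definition Ker :: "('a::field^'n^'n) set \<Rightarrow> ('a^'n) set" where
  "Ker B = {v. \<forall>b\<in>B. b *v v = 0}"
definition AnnL :: "('a::field^'n^'n) set \<Rightarrow> ('a^'n^'n) set \<Rightarrow> ('a^'n^'n) set" where
  "AnnL S X = {b\<in>S. \<forall>a\<in>X. b ** a = 0}"
fun Dset :: "('a::field^'n^'n) set \<Rightarrow> nat \<Rightarrow> ('a^'n^'n) set" where
  "Dset S 0 = {a\<in>S. a = 0}"
| "Dset S (Suc k) = {a\<in>S. \<forall>s\<in>S. s ** a \<in> Dset S k}"

lemma Ker_subspace: "vec.subspace (Ker B)"
  unfolding vec.subspace_def Ker_def
  by (auto simp: matrix_vector_right_distrib vec.scale)

lemma galois: "AnnV T (Ker (AnnV T M)) = AnnV T M"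
  by (auto simp: AnnV_def Ker_def)

lemma mat_zero_iff: "(b ** a = 0) \<longleftrightarrow> (\<forall>x. b *v (a *v x) = 0)"
  by (simp add: matrix_eq matrix_vector_mul_assoc)

lemma AnnL_eq: "AnnL T Y = AnnV T {a *v x |a x. a \<in> Y}"
  by (auto simp: AnnL_def AnnV_def mat_zero_iff)



lemma mat_mul_0_left: "(0::'a::field^'n^'n) ** a = 0"
  by (simp add: mat_zero_iff)
lemma mat_mul_0_right: "a ** (0::'a::field^'n^'n) = 0"
  by (simp add: mat_zero_iff)

lemma succ_char:
  fixes V :: "nat \<Rightarrow> ('a::field^'n) set"
  assumes "is_flag r V" "k < r"
  shows "{v. \<forall>s\<in>flag_phi r V. s *v v \<in> V k} = V (Suc k)"
proof
  show "V (Suc k) \<subseteq> {v. \<forall>s\<in>flag_phi r V. s *v v \<in> V k}"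
    using phi_apply[of _ r V "Suc k"] assms by auto
next
  show "{v. \<forall>s\<in>flag_phi r V. s *v v \<in> V k} \<subseteq> V (Suc k)"
  proof
    fix v assume v: "v \<in> {v. \<forall>s\<in>flag_phi r V. s *v v \<in> V k}"
    show "v \<in> V (Suc k)"
    proof (rule ccontr)
      assume nv: "v \<notin> V (Suc k)"
      obtain w where w: "w \<in> V (Suc k)" "w \<notin> V k"
        using flag_strict[OF assms(1), of "Suc k"] assms(2) by auto
      have sub: "vec.subspace (V (Suc k))" using flag_sub[OF assms(1), of "Suc k"] assms(2) by simp
      obtain g where g: "Vector_Spaces.linear (*s) (*s) g" "\<forall>x\<in>V (Suc k). g x = 0" "g v = w"
          "range g \<subseteq> vec.span {w}"
        using ext_map[OF sub nv] by blast
      have "vec.span {w} \<subseteq> V (Suc k)" by (rule vec.span_minimal) (use sub w(1) in auto)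
      then have "matrix g \<in> flag_phi r V"
        using rank_one_in_phi[OF assms(1) _ g(1) g(2)] g(4) assms(2) by auto
      then have "matrix g *v v \<in> V k" using v by auto
      then show False using matrix_works[OF g(1)] g(3) w(2) by simp
    qed
  qed
qed

lemma Dset_char:
  fixes V :: "nat \<Rightarrow> ('a::field^'n) set"
  assumes "is_flag r V"
  shows "k \<le> r \<Longrightarrow> Dset (flag_phi r V) k = {a \<in> flag_phi r V. \<forall>x. a *v x \<in> V k}"
proof (induction k)
  case 0
  have "V 0 = {0}" using assms by (simp add: is_flag_def)
  then show ?case by (auto simp: matrix_eq)
next
  case (Suc k)
  then have IH: "Dset (flag_phi r V) k = {a \<in> flag_phi r V. \<forall>x. a *v x \<in> V k}" by simp
  have step: "(s ** a \<in> Dset (flag_phi r V) k) \<longleftrightarrow> (\<forall>x. s *v (a *v x) \<in> V k)"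
    if "a \<in> flag_phi r V" "s \<in> flag_phi r V" for a s
  proof -
    have "s ** a \<in> flag_phi r V" by (rule phi_mult[OF assms that])
    then show ?thesis unfolding IH by (simp add: matrix_vector_mul_assoc)
  qed
  have "Dset (flag_phi r V) (Suc k) = {a \<in> flag_phi r V. \<forall>s\<in>flag_phi r V. \<forall>x. s *v (a *v x) \<in> V k}"
    unfolding Dset.simps by (rule Collect_cong) (use step in blast)
  also have "\<dots> = {a \<in> flag_phi r V. \<forall>x. a *v x \<in> V (Suc k)}"
  proof -
    have se: "{v. \<forall>s\<in>flag_phi r V. s *v v \<in> V k} = V (Suc k)"
      using succ_char[OF assms, of k] Suc.prems by simp
    have e: "(\<forall>s\<in>flag_phi r V. s *v y \<in> V k) \<longleftrightarrow> y \<in> V (Suc k)" for y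
      using se by blast
    show ?thesis using e by blast
  qed
  finally show ?case .
qed

lemma iso_zero:
  assumes bij: "bij_betw f S T" and hom: "\<forall>a\<in>S. \<forall>b\<in>S. f (a ** b) = f a ** f b"
    and "(0::'a::field^'n^'n) \<in> S" "0 \<in> T"
  shows "f 0 = 0"
proof -
  obtain a where a: "a \<in> S" "f a = 0" using bij assms(4) unfolding bij_betw_def by (metis imageE)
  have "f 0 = f (0 ** a)" by (simp add: mat_mul_0_left)
  also have "\<dots> = f 0 ** f a" using hom assms(3) a(1) by blast
  also have "\<dots> = 0" using a(2) by (simp add: mat_mul_0_right)
  finally show ?thesis .
qed

lemma iso_Dset:
  fixes S T :: "('a::field^'n^'n) set"
  assumes bij: "bij_betw f S T" and hom: "\<forall>a\<in>S. \<forall>b\<in>S. f (a ** b) = f a ** f b"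
    and f0: "f 0 = 0" and S0: "0 \<in> S" and cl: "\<forall>a\<in>S. \<forall>b\<in>S. a ** b \<in> S"
  shows "a \<in> S \<Longrightarrow> a \<in> Dset S k \<longleftrightarrow> f a \<in> Dset T k"
proof (induction k arbitrary: a)
  case 0
  have "a = 0 \<longleftrightarrow> f a = f 0" using inj_on_eq_iff[OF bij_betw_imp_inj_on[OF bij]] 0 S0 by blast
  then show ?case using 0 f0 bij_betw_apply[OF bij 0] by auto
next
  case (Suc k)
  have "a \<in> Dset S (Suc k) \<longleftrightarrow> (\<forall>s\<in>S. s ** a \<in> Dset S k)" using Suc.prems by simp
  also have "\<dots> \<longleftrightarrow> (\<forall>s\<in>S. f (s ** a) \<in> Dset T k)" using Suc.IH cl Suc.prems by blast
  also have "\<dots> \<longleftrightarrow> (\<forall>s\<in>S. f s ** f a \<in> Dset T k)" using hom Suc.prems by auto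
  also have "\<dots> \<longleftrightarrow> (\<forall>s'\<in>T. s' ** f a \<in> Dset T k)" using bij unfolding bij_betw_def by auto
  also have "\<dots> \<longleftrightarrow> f a \<in> Dset T (Suc k)" using bij_betw_apply[OF bij Suc.prems] by simp
  finally show ?case .
qed

lemma iso_AnnL:
  fixes S T :: "('a::field^'n^'n) set"
  assumes bij: "bij_betw f S T" and hom: "\<forall>a\<in>S. \<forall>b\<in>S. f (a ** b) = f a ** f b"
    and f0: "f 0 = 0" and S0: "0 \<in> S" and cl: "\<forall>a\<in>S. \<forall>b\<in>S. a ** b \<in> S" and X: "X \<subseteq> S"
  shows "f ` AnnL S X = AnnL T (f ` X)"
proof -
  have key: "b \<in> AnnL S X \<longleftrightarrow> f b \<in> AnnL T (f ` X)" if b: "b \<in> S" for b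
  proof -
    have "b ** a = 0 \<longleftrightarrow> f b ** f a = 0" if "a \<in> X" for a
    proof -
      have "b ** a \<in> S" using cl b that X by blast
      then have e: "b ** a = 0 \<longleftrightarrow> f (b ** a) = f 0"
        using inj_on_eq_iff[OF bij_betw_imp_inj_on[OF bij]] S0 by blast
      have "f (b ** a) = f b ** f a" using hom b that X by blast
      then show ?thesis using e f0 by simp
    qed
    then have "(\<forall>a\<in>X. b ** a = 0) \<longleftrightarrow> (\<forall>a\<in>X. f b ** f a = 0)" by blast
    then show ?thesis using b bij_betw_apply[OF bij b] by (auto simp: AnnL_def)
  qed
  show ?thesis
  proof
    show "f ` AnnL S X \<subseteq> AnnL T (f ` X)"
    proof (rule image_subsetI)
      fix x assume x: "x \<in> AnnL S X"
      then have "x \<in> S" by (simp add: AnnL_def)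
      then show "f x \<in> AnnL T (f ` X)" using key x by blast
    qed
    show "AnnL T (f ` X) \<subseteq> f ` AnnL S X"
    proof
      fix c assume c: "c \<in> AnnL T (f ` X)"
      then have "c \<in> T" by (simp add: AnnL_def)
      then obtain b where "b \<in> S" "c = f b" using bij by (auto simp: bij_betw_def)
      then show "c \<in> f ` AnnL S X" using key c by blast
    qed
  qed
qed

lemma iso_inv:
  fixes S T :: "('a::field^'n^'n) set"
  assumes "semigroup_iso S T f" "\<forall>a\<in>S. \<forall>b\<in>S. a ** b \<in> S"
  shows "semigroup_iso T S (inv_into S f)"
proof -
  have bij: "bij_betw f S T" and hom: "\<forall>a\<in>S. \<forall>b\<in>S. f (a ** b) = f a ** f b"
    using assms(1) by (auto simp: semigroup_iso_def)
  have "bij_betw (inv_into S f) T S" by (rule bij_betw_inv_into[OF bij])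
  moreover have "\<forall>a\<in>T. \<forall>b\<in>T. inv_into S f (a ** b) = inv_into S f a ** inv_into S f b"
  proof (intro ballI)
    fix a b assume "a \<in> T" "b \<in> T"
    then obtain x y where xy: "x\<in>S" "y\<in>S" "a = f x" "b = f y" using bij by (auto simp: bij_betw_def)
    then have "a ** b = f (x ** y)" using hom by auto
    moreover have "x ** y \<in> S" using assms(2) xy by auto
    ultimately show "inv_into S f (a ** b) = inv_into S f a ** inv_into S f b"
      using xy inv_into_f_f[OF bij_betw_imp_inj_on[OF bij]] by simp
  qed
  ultimately show ?thesis by (simp add: semigroup_iso_def)
qed



lemma AnnV_AnnL:
  fixes V :: "nat \<Rightarrow> ('a::field^'n) set"
  assumes fl: "is_flag r V" and t: "t < r" and U: "vec.subspace U" "U \<subseteq> V t"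
  shows "AnnV (flag_phi r V) U = AnnL (flag_phi r V) {a \<in> flag_phi r V. \<forall>x. a *v x \<in> U}"
proof
  show "AnnV (flag_phi r V) U \<subseteq> AnnL (flag_phi r V) {a \<in> flag_phi r V. \<forall>x. a *v x \<in> U}"
    by (auto simp: AnnV_def AnnL_def mat_zero_iff)
next
  show "AnnL (flag_phi r V) {a \<in> flag_phi r V. \<forall>x. a *v x \<in> U} \<subseteq> AnnV (flag_phi r V) U"
  proof
    fix b assume b: "b \<in> AnnL (flag_phi r V) {a \<in> flag_phi r V. \<forall>x. a *v x \<in> U}"
    have bS: "b \<in> flag_phi r V" using b by (simp add: AnnL_def)
    have "b *v u = 0" if u: "u \<in> U" for u
    proof -
      have "V (r-1) \<subset> V r" using flag_strict[OF fl, of r] t by simp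
      moreover have "V r = UNIV" using fl by (simp add: is_flag_def)
      ultimately obtain z where z: "z \<notin> V (r-1)" by blast
      have sub: "vec.subspace (V (r-1))" using flag_sub[OF fl, of "r-1"] by simp
      obtain g where g: "Vector_Spaces.linear (*s) (*s) g" "\<forall>x\<in>V (r-1). g x = 0" "g z = u"
          "range g \<subseteq> vec.span {u}"
        using ext_map[OF sub z] by blast
      have sp: "vec.span {u} \<subseteq> U" by (rule vec.span_minimal) (use U(1) u in auto)
      have "V t \<subseteq> V (r-1)" by (rule flag_mono[OF fl]) (use t in arith)+
      then have "U \<subseteq> V (r-1)" using U(2) by auto
      then have "matrix g \<in> flag_phi r V"
        using rank_one_in_phi[OF fl _ g(1) g(2)] g(4) sp by auto
      moreover have "\<forall>x. matrix g *v x \<in> U" using matrix_works[OF g(1)] g(4) sp by auto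
      ultimately have "b ** matrix g = 0" using b by (auto simp: AnnL_def)
      then have "b *v (matrix g *v z) = 0" by (simp add: mat_zero_iff)
      then show ?thesis using matrix_works[OF g(1)] g(3) by simp
    qed
    then show "b \<in> AnnV (flag_phi r V) U" using bS by (simp add: AnnV_def)
  qed
qed

lemma nonzero_V1:
  assumes fl: "is_flag r V" "1 \<le> r"
  obtains w where "w \<in> V 1" "w \<noteq> 0"
proof -
  have "V 0 \<subset> V 1" using flag_strict[OF fl(1), of 1] fl(2) by simp
  moreover have "V 0 = {0}" using fl(1) by (simp add: is_flag_def)
  ultimately show ?thesis using that by blast
qed

lemma Ker_AnnV:
  fixes V :: "nat \<Rightarrow> ('a::field^'n) set"
  assumes fl: "is_flag r V" "1 \<le> r" "vec.subspace U" "V 1 \<subseteq> U"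
  shows "Ker (AnnV (flag_phi r V) U) = U"
proof
  show "U \<subseteq> Ker (AnnV (flag_phi r V) U)" by (auto simp: Ker_def AnnV_def)
  show "Ker (AnnV (flag_phi r V) U) \<subseteq> U"
  proof
    fix v assume v: "v \<in> Ker (AnnV (flag_phi r V) U)"
    show "v \<in> U"
    proof (rule ccontr)
      assume nv: "v \<notin> U"
      obtain w where w: "w \<in> V 1" "w \<noteq> 0" using nonzero_V1[OF fl(1,2)] by blast
      obtain g where g: "Vector_Spaces.linear (*s) (*s) g" "\<forall>x\<in>U. g x = 0" "g v = w"
          "range g \<subseteq> vec.span {w}"
        using ext_map[OF fl(3) nv] by blast
      have "vec.span {w} \<subseteq> V 1" by (rule vec.span_minimal) (use flag_sub[OF fl(1) fl(2)] w in auto)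
      then have r1: "range g \<subseteq> V 1" using g(4) by auto
      have k1: "\<forall>x\<in>V 1. g x = 0" using g(2) fl(4) by auto
      have "matrix g \<in> flag_phi r V"
        by (rule rank_one_in_phi[OF fl(1) fl(2) g(1) k1 r1])
      moreover have "\<forall>x\<in>U. matrix g *v x = 0" using matrix_works[OF g(1)] g(2) by simp
      ultimately have "matrix g \<in> AnnV (flag_phi r V) U" by (simp add: AnnV_def)
      then have "matrix g *v v = 0" using v by (auto simp: Ker_def)
      then show False using matrix_works[OF g(1)] g(3) w(2) by simp
    qed
  qed
qed

lemma Ker_AnnL_sub:
  fixes W :: "nat \<Rightarrow> ('a::field^'n) set"
  assumes fl: "is_flag r W" and t: "1 \<le> t" "t \<le> r" and Y: "Y \<subseteq> Dset (flag_phi r W) t"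
  shows "Ker (AnnL (flag_phi r W) Y) \<subseteq> W t"
proof
  fix v assume v: "v \<in> Ker (AnnL (flag_phi r W) Y)"
  show "v \<in> W t"
  proof (rule ccontr)
    assume nv: "v \<notin> W t"
    obtain w where w: "w \<in> W 1" "w \<noteq> 0" using nonzero_V1[OF fl] t by force
    have wt: "w \<in> W t" using flag_mono[OF fl t] w(1) by blast
    have sub: "vec.subspace (W t)" using flag_sub[OF fl t(2)] .
    obtain g where g: "Vector_Spaces.linear (*s) (*s) g" "\<forall>x\<in>W t. g x = 0" "g v = w"
        "range g \<subseteq> vec.span {w}"
      using ext_map[OF sub nv] by blast
    have "vec.span {w} \<subseteq> W t" by (rule vec.span_minimal) (use sub wt in auto)
    then have gm: "matrix g \<in> flag_phi r W" using rank_one_in_phi[OF fl t(2) g(1) g(2)] g(4) by auto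
    have "matrix g ** a = 0" if "a \<in> Y" for a
    proof -
      have "\<forall>x. a *v x \<in> W t" using Y that Dset_char[OF fl t(2)] by auto
      then show ?thesis using matrix_works[OF g(1)] g(2) by (simp add: mat_zero_iff)
    qed
    then have "matrix g \<in> AnnL (flag_phi r W) Y" using gm by (simp add: AnnL_def)
    then have "matrix g *v v = 0" using v by (auto simp: Ker_def)
    then show False using matrix_works[OF g(1)] g(3) w(2) by simp
  qed
qed

lemma Ker_W1:
  fixes W :: "nat \<Rightarrow> ('a::field^'n) set"
  assumes fl: "is_flag r W" "1 \<le> r" "B \<subseteq> flag_phi r W"
  shows "W 1 \<subseteq> Ker B"
proof
  fix x assume x: "x \<in> W 1"
  have "\<forall>b\<in>B. b *v x = 0"
  proof
    fix b assume "b \<in> B"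
    then have "b *v x \<in> W 0" using phi_apply[of b r W 1 x] fl x by auto
    then show "b *v x = 0" using fl(1) by (simp add: is_flag_def)
  qed
  then show "x \<in> Ker B" by (simp add: Ker_def)
qed



lemma main_le:
  fixes V W :: "nat \<Rightarrow> ('a::field^'n) set"
  assumes flV: "is_flag r V" and flW: "is_flag r W"
    and iso: "semigroup_iso (flag_phi r V) (flag_phi r W) f" and t: "1 \<le> t" "t < r"
  shows "vec.dim (V t) - vec.dim (V 1) \<le> vec.dim (W t) - vec.dim (W 1)"
proof -
  define S where "S = flag_phi r V"
  define T where "T = flag_phi r W"
  have bij: "bij_betw f S T" and hom: "\<forall>a\<in>S. \<forall>b\<in>S. f (a ** b) = f a ** f b"
    using iso by (auto simp: semigroup_iso_def S_def T_def)
  have S0: "0 \<in> S" using phi_zero[OF flV] by (simp add: S_def)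
  have T0: "0 \<in> T" using phi_zero[OF flW] by (simp add: T_def)
  have clS: "\<forall>a\<in>S. \<forall>b\<in>S. a ** b \<in> S" using phi_mult[OF flV] by (simp add: S_def)
  have f0: "f 0 = 0" by (rule iso_zero[OF bij hom S0 T0])
  have tr: "t \<le> r" using t by simp
  have r1: "1 \<le> r" using t by simp
  have fD: "f ` Dset S t = Dset T t"
  proof -
    have DS: "Dset S t \<subseteq> S" by (cases t) auto
    have DT: "Dset T t \<subseteq> T" by (cases t) auto
    have e: "a \<in> Dset S t \<longleftrightarrow> f a \<in> Dset T t" if "a \<in> S" for a
      by (rule iso_Dset[OF bij hom f0 S0 clS that])
    show ?thesis
    proof
      show "f ` Dset S t \<subseteq> Dset T t" using e DS by blast
      show "Dset T t \<subseteq> f ` Dset S t"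
      proof
        fix c assume c: "c \<in> Dset T t"
        then obtain b where "b \<in> S" "c = f b" using DT bij by (auto simp: bij_betw_def)
        then show "c \<in> f ` Dset S t" using e c by blast
      qed
    qed
  qed
  define X where "X U = {a \<in> S. \<forall>x. a *v x \<in> U}" for U
  define \<Phi> where "\<Phi> U = Ker (f ` AnnV S U)" for U
  define good where "good U \<longleftrightarrow> vec.subspace U \<and> V 1 \<subseteq> U \<and> U \<subseteq> V t" for U
  have fA: "f ` AnnV S U = AnnV T (\<Phi> U)"
    and \<Phi>b: "vec.subspace (\<Phi> U) \<and> W 1 \<subseteq> \<Phi> U \<and> \<Phi> U \<subseteq> W t" if gU: "good U" for U
  proof -
    have XS: "X U \<subseteq> S" by (auto simp: X_def)
    have XD: "X U \<subseteq> Dset S t" using gU Dset_char[OF flV tr] by (auto simp: X_def good_def S_def)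
    have "f ` AnnV S U = f ` AnnL S (X U)"
      using AnnV_AnnL[OF flV t(2)] gU by (simp add: good_def S_def X_def)
    also have "\<dots> = AnnL T (f ` X U)" by (rule iso_AnnL[OF bij hom f0 S0 clS XS])
    finally have e1: "f ` AnnV S U = AnnL T (f ` X U)" .
    have YD: "f ` X U \<subseteq> Dset T t" using XD fD by blast
    have PU: "\<Phi> U = Ker (AnnL T (f ` X U))" using e1 by (simp add: \<Phi>_def)
    show "f ` AnnV S U = AnnV T (\<Phi> U)" unfolding PU e1 by (simp only: AnnL_eq galois)
    have "f ` AnnV S U \<subseteq> T" using bij_betw_apply[OF bij] by (auto simp: AnnV_def)
    then have "W 1 \<subseteq> \<Phi> U" unfolding \<Phi>_def using Ker_W1[OF flW r1] by (simp add: T_def)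
    moreover have "\<Phi> U \<subseteq> W t" unfolding PU using Ker_AnnL_sub[OF flW t(1) tr] YD by (simp add: T_def)
    ultimately show "vec.subspace (\<Phi> U) \<and> W 1 \<subseteq> \<Phi> U \<and> \<Phi> U \<subseteq> W t"
      by (simp add: \<Phi>_def Ker_subspace)
  qed
  have strict: "\<Phi> U \<subset> \<Phi> U'" if "good U" "good U'" "U \<subset> U'" for U U'
  proof (rule psubsetI)
    have "AnnV S U' \<subseteq> AnnV S U" using that(3) by (auto simp: AnnV_def)
    then show "\<Phi> U \<subseteq> \<Phi> U'" by (auto simp: \<Phi>_def Ker_def)
    show "\<Phi> U \<noteq> \<Phi> U'"
    proof
      assume eq: "\<Phi> U = \<Phi> U'"
      then have "f ` AnnV S U = f ` AnnV S U'" using fA that(1,2) by simp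
      moreover have "AnnV S U \<subseteq> S" "AnnV S U' \<subseteq> S" by (auto simp: AnnV_def)
      ultimately have "AnnV S U = AnnV S U'"
        using inj_on_image_eq_iff[OF bij_betw_imp_inj_on[OF bij]] by blast
      then have "Ker (AnnV S U) = Ker (AnnV S U')" by simp
      moreover have "Ker (AnnV S U) = U" using Ker_AnnV[OF flV r1, of U] that(1) by (simp add: good_def S_def)
      moreover have "Ker (AnnV S U') = U'" using Ker_AnnV[OF flV r1, of U'] that(2) by (simp add: good_def S_def)
      ultimately show False using that(3) by simp
    qed
  qed
  define m where "m = vec.dim (V t) - vec.dim (V 1)"
  have dV: "vec.dim (V 1) \<le> vec.dim (V t)" using flag_mono[OF flV t(1) tr] vec.dim_subset by blast
  have ind: "\<exists>U. good U \<and> vec.dim U = vec.dim (V 1) + k \<and> vec.dim (W 1) + k \<le> vec.dim (\<Phi> U)"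
    if "k \<le> m" for k
    using that
  proof (induction k)
    case 0
    have g1: "good (V 1)" using flag_sub[OF flV r1] flag_mono[OF flV t(1) tr] by (simp add: good_def)
    then have "W 1 \<subseteq> \<Phi> (V 1)" using \<Phi>b by blast
    then have "vec.dim (W 1) \<le> vec.dim (\<Phi> (V 1))" by (rule vec.dim_subset)
    then show ?case using g1 by auto
  next
    case (Suc k)
    then obtain U where U: "good U" "vec.dim U = vec.dim (V 1) + k" "vec.dim (W 1) + k \<le> vec.dim (\<Phi> U)"
      by auto
    have "vec.dim U < vec.dim (V t)" using U(2) Suc.prems dV by (simp add: m_def)
    then have "U \<noteq> V t" by auto
    then obtain v where v: "v \<in> V t" "v \<notin> U" using U(1) by (auto simp: good_def)
    define U' where "U' = vec.span (insert v U)"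
    have subU: "vec.subspace U" using U(1) by (simp add: good_def)
    have spanU: "vec.span U = U" using subU vec.span_eq_iff by blast
    have subVt: "vec.subspace (V t)" using flag_sub[OF flV tr] .
    have "insert v U \<subseteq> V t" using U(1) v(1) by (auto simp: good_def)
    then have "U' \<subseteq> V t" unfolding U'_def using vec.span_minimal subVt by blast
    moreover have "U \<subseteq> U'" unfolding U'_def using vec.span_superset[of "insert v U"] by blast
    ultimately have gU': "good U'" using U(1) by (auto simp: good_def U'_def)
    have nvs: "v \<notin> vec.span U" unfolding spanU by (rule v(2))
    have dU': "vec.dim U' = vec.dim U + 1" by (simp add: U'_def vec.dim_insert nvs)
    have "U \<subset> U'" using v \<open>U \<subseteq> U'\<close> vec.span_superset[of "insert v U"] by (auto simp: U'_def)
    then have "\<Phi> U \<subset> \<Phi> U'" using strict U(1) gU' by blast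
    moreover have "vec.span (\<Phi> U) = \<Phi> U" "vec.span (\<Phi> U') = \<Phi> U'"
      using \<Phi>b U(1) gU' vec.span_eq_iff by blast+
    ultimately have "vec.dim (\<Phi> U) < vec.dim (\<Phi> U')" using vec.dim_psubset by metis
    then show ?case using gU' dU' U by (intro exI[of _ U']) auto
  qed
  obtain U where U: "good U" "vec.dim (W 1) + m \<le> vec.dim (\<Phi> U)" using ind[of m] by auto
  have "vec.dim (\<Phi> U) \<le> vec.dim (W t)" using \<Phi>b[OF U(1)] vec.dim_subset by blast
  then show ?thesis using U(2) by (simp add: m_def)
qed

theorem proposition16:
  fixes V W :: "nat \<Rightarrow> ('a::field ^ 'n) set" and r :: nat
  assumes "r \<ge> 3"
    and "is_flag r V" and "is_flag r W"
    and "\<exists>f. semigroup_iso (flag_phi r V) (flag_phi r W) f"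
  shows "\<forall>t\<in>{2..r - 1}. flag_sig V t = flag_sig W t"
proof -
  obtain f where f: "semigroup_iso (flag_phi r V) (flag_phi r W) f" using assms(4) by blast
  have g: "semigroup_iso (flag_phi r W) (flag_phi r V) (inv_into (flag_phi r V) f)"
    using iso_inv[OF f] phi_mult[OF assms(2)] by blast
  have eq: "vec.dim (V t) - vec.dim (V 1) = vec.dim (W t) - vec.dim (W 1)" if "1 \<le> t" "t < r" for t
    using main_le[OF assms(2) assms(3) f that] main_le[OF assms(3) assms(2) g that] by simp
  show ?thesis
  proof
    fix t assume t: "t \<in> {2..r-1}"
    then have t1: "1 \<le> t - 1" "t - 1 < r" "1 \<le> t" "t < r" "t - 1 \<le> t" "t \<le> r" using assms(1) by auto
    have "V 1 \<subseteq> V (t-1)" "V (t-1) \<subseteq> V t"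
      using flag_mono[OF assms(2) t1(1)] flag_mono[OF assms(2) t1(5) t1(6)] t1 by auto
    then have m1: "vec.dim (V 1) \<le> vec.dim (V (t-1))" "vec.dim (V (t-1)) \<le> vec.dim (V t)"
      using vec.dim_subset by blast+
    have "W 1 \<subseteq> W (t-1)" "W (t-1) \<subseteq> W t"
      using flag_mono[OF assms(3) t1(1)] flag_mono[OF assms(3) t1(5) t1(6)] t1 by auto
    then have m2: "vec.dim (W 1) \<le> vec.dim (W (t-1))" "vec.dim (W (t-1)) \<le> vec.dim (W t)"
      using vec.dim_subset by blast+
    have ar: "\<And>a b c a' b' c'::nat. a \<le> b \<Longrightarrow> b \<le> c \<Longrightarrow> a' \<le> b' \<Longrightarrow> b' \<le> c'
       \<Longrightarrow> c - a = c' - a' \<Longrightarrow> b - a = b' - a' \<Longrightarrow> c - b = c' - b'" by arith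
    show "flag_sig V t = flag_sig W t"
      unfolding flag_sig_def by (rule ar[OF m1 m2 eq[OF t1(3,4)] eq[OF t1(1,2)]])
  qed
qed


end
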